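(* Let $\{u_k(t), b_k(t)\}_{k\in\mathbb{Z}}$ be a solution of the unrestricted Toda chain $$\dot b_k = u_{k+1}-u_k,\qquad \dot u_k = u_k\,(b_k-b_{k-1}),\qquad k\in\mathbb{Z},$$ with $u_k(t)\neq 0$ for all $k$. Fix an integer $j$. Then $b_j(t)\equiv 0$ if and only if $$u_{j+n}=u_{j-n+1},\qquad b_{j+n-1}=-b_{j-n+1}\qquad\text{for all } n\in\mathbb{Z}.$$
   Context: All functions are analytic functions of the real (or complex) variable $t$; a dot denotes $d/dt$. Nondegeneracy $u_k(t)\neq 0$ is the paper's standing assumption for solutions of the unrestricted Toda chain. *)

theory Defs
  imports "HOL-Analysis.Analysis"
begin

end

theory Submission
  imports Defs
begin

lemma deriv_eq_open:
  assumes "open S" "\<And>t. t \<in> S \<Longrightarrow> f t = g t" "t \<in> S"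
  shows "deriv f t = deriv g t"
proof (rule deriv_cong_ev)
  show "\<forall>\<^sub>F x in nhds t. f x = g x"
    using assms by (metis (mono_tags, lifting) eventually_nhds_in_open eventually_mono)
qed simp

lemma deriv_neg_open:
  fixes g :: "complex \<Rightarrow> complex"
  assumes "open S" "g analytic_on S" "t \<in> S"
  shows "deriv (\<lambda>s. - g s) t = - deriv g t"
proof -
  have "g field_differentiable at t"
    using assms analytic_on_imp_differentiable_at by blast
  then have "(g has_field_derivative deriv g t) (at t)"
    using DERIV_deriv_iff_field_differentiable by blast
  then have "((\<lambda>s. - g s) has_field_derivative - deriv g t) (at t)"
    by (rule DERIV_minus)
  then show ?thesis by (rule DERIV_imp_deriv)
qed

theorem mainTheorem1:
  fixes u b :: "int \<Rightarrow> complex \<Rightarrow> complex"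
    and S :: "complex set" and j :: int
  assumes S_open: "open S" and S_conn: "connected S" and S_ne: "S \<noteq> {}"
    and u_an: "\<And>k. u k analytic_on S"
    and b_an: "\<And>k. b k analytic_on S"
    and toda_b: "\<And>k t. t \<in> S \<Longrightarrow> deriv (b k) t = u (k + 1) t - u k t"
    and toda_u: "\<And>k t. t \<in> S \<Longrightarrow> deriv (u k) t = u k t * (b k t - b (k - 1) t)"
    and nondeg: "\<And>k t. t \<in> S \<Longrightarrow> u k t \<noteq> 0"
  shows "(\<forall>t\<in>S. b j t = 0) \<longleftrightarrow>
         (\<forall>n::int. \<forall>t\<in>S. u (j + n) t = u (j - n + 1) t \<and> b (j + n - 1) t = - b (j - n + 1) t)"
proof
  assume R: "\<forall>n::int. \<forall>t\<in>S. u (j + n) t = u (j - n + 1) t \<and> b (j + n - 1) t = - b (j - n + 1) t"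
  show "\<forall>t\<in>S. b j t = 0"
  proof
    fix t assume "t \<in> S"
    with R have "b (j + 1 - 1) t = - b (j - 1 + 1) t" by blast
    then show "b j t = 0" by simp
  qed
next
  assume bj: "\<forall>t\<in>S. b j t = 0"
  define C where "C m \<longleftrightarrow> (\<forall>t\<in>S. u (j + int m) t = u (j - int m + 1) t)" for m :: nat
  define B where "B m \<longleftrightarrow> (\<forall>t\<in>S. b (j + int m) t = - b (j - int m) t)" for m :: nat
  have CB: "C (Suc m)" if "B m" "C m" for m
    unfolding C_def
  proof
    fix t assume t: "t \<in> S"
    have "deriv (b (j + int m)) t = deriv (\<lambda>s. - b (j - int m) s) t"
      using that t S_open unfolding B_def by (intro deriv_eq_open[of S]) auto
    also have "\<dots> = - deriv (b (j - int m)) t"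
      using deriv_neg_open[OF S_open b_an t] .
    finally have "u (j + int m + 1) t - u (j + int m) t = - (u (j - int m + 1) t - u (j - int m) t)"
      using toda_b t by simp
    moreover have "u (j + int m) t = u (j - int m + 1) t" using that(2) t unfolding C_def by blast
    ultimately show "u (j + int (Suc m)) t = u (j - int (Suc m) + 1) t" by (simp add: algebra_simps)
  qed
  have BB: "B (Suc m)" if "B m" "C (Suc m)" for m
    unfolding B_def
  proof
    fix t assume t: "t \<in> S"
    have e: "u (j + int m + 1) s = u (j - int m) s" if "s \<in> S" for s
      using \<open>C (Suc m)\<close> that unfolding C_def by (simp add: algebra_simps)
    have "deriv (u (j + int m + 1)) t = deriv (u (j - int m)) t"
      using e t S_open by (intro deriv_eq_open[of S]) auto
    then have "u (j + int m + 1) t * (b (j + int m + 1) t - b (j + int m) t)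
             = u (j - int m) t * (b (j - int m) t - b (j - int m - 1) t)"
      using toda_u t by simp
    then have "b (j + int m + 1) t - b (j + int m) t = b (j - int m) t - b (j - int m - 1) t"
      using e[OF t] nondeg[OF t] by (metis mult_left_cancel)
    moreover have "b (j + int m) t = - b (j - int m) t" using that(1) t unfolding B_def by blast
    ultimately have "b (j + int m + 1) t = - b (j - int m - 1) t"
      by (metis add.commute add_minus_cancel diff_add_cancel uminus_add_conv_diff)
    moreover have "j + int (Suc m) = j + int m + 1" "j - int (Suc m) = j - int m - 1" by simp_all
    ultimately show "b (j + int (Suc m)) t = - b (j - int (Suc m)) t" by (simp only:)
  qed
  have all: "C m \<and> B m" for m
  proof (induction m)
    case 0
    have "u j t = u (j + 1) t" if t: "t \<in> S" for t
    proof -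
      have "deriv (b j) t = deriv (\<lambda>_. 0) t"
        using bj t S_open by (intro deriv_eq_open[of S]) auto
      then have "u (j + 1) t - u j t = 0" using toda_b[OF t] by simp
      then show ?thesis by simp
    qed
    then show ?case using bj unfolding C_def B_def by simp
  next
    case (Suc m) then show ?case using CB BB by blast
  qed
  show "\<forall>n::int. \<forall>t\<in>S. u (j + n) t = u (j - n + 1) t \<and> b (j + n - 1) t = - b (j - n + 1) t"
  proof (intro allI ballI)
    fix n :: int and t assume t: "t \<in> S"
    show "u (j + n) t = u (j - n + 1) t \<and> b (j + n - 1) t = - b (j - n + 1) t"
    proof (cases "n \<ge> 1")
      case True
      then obtain m where m: "n = int m + 1" by (metis add.commute le_add_diff_inverse nonneg_int_cases diff_ge_0_iff_ge)
      have "C (Suc m)" "B m" using all by auto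
      then show ?thesis using t m unfolding C_def B_def by (auto simp: algebra_simps)
    next
      case False
      then obtain m where m: "n = - int m" by (metis int_cases2 linorder_not_le neg_0_less_iff_less zless_imp_add1_zle add_0 minus_minus nat_0_le nat_int zero_le_imp_eq_int zle_diff1_eq le_minus_iff minus_zero)
      have "C (Suc m)" "B (Suc m)" using all by auto
      then have "u (j + int m + 1) t = u (j - int m) t" "b (j + int m + 1) t = - b (j - int m - 1) t"
        using t unfolding C_def B_def by (auto simp: algebra_simps)
      then show ?thesis using m by (simp add: algebra_simps)
    qed
  qed
qed

end
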